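(* Let $n\ge 2$ and let $\|\cdot\|$ be a norm on $\mathbb{R}^{n+1}$ which is $C^2$ smooth on $\mathbb{R}^{n+1}\setminus\{0\}$. Suppose there exists $\varepsilon>0$ such that $$\langle \nabla^2_{\mathbb{R}^{n+1}}\|\cdot\|(y)\,\theta,\theta\rangle \geq \varepsilon\,\|y\| \quad\text{for all } y,\theta\in S^n \text{ with } \langle y,\theta\rangle = 0.$$ Then for every $\alpha\ge -n$, the weighted manifold $(S^n,g,\eta^{n,\alpha})$ satisfies $CD\big(n-1-(1-\varepsilon)(n+\alpha), -\alpha\big)$, where $d\eta^{n,\alpha}(y) = \frac{c_{n,\alpha}}{\|y\|^{n+\alpha}}\,d\sigma^n(y)$ and $c_{n,\alpha}>0$ is a normalizing constant.
   Context: $S^n\subset\mathbb{R}^{n+1}$ is the Euclidean unit sphere with canonical Riemannian metric $g$; $\sigma^n$ is the Haar probability measure on $S^n$; $\langle\cdot,\cdot\rangle$ is the Euclidean inner product and $\nabla^2_{\mathbb{R}^{n+1}}$ the Euclidean Hessian. Curvature-Dimension condition (tensorial definition): for a closed Riemannian manifold $(M^n,g)$ with a measure $\mu$ having positive $C^2$ density $\Psi$ with respect to the Riemannian volume, and $N\in(-\infty,\infty]$, set $\mathrm{Ric}_{g,\mu,N} := \mathrm{Ric}_g - \nabla_g^2\log\Psi - \frac{1}{N-n}\nabla_g\log\Psi\otimes\nabla_g\log\Psi$ (conventions $1/\infty=0$, $1/0=+\infty$, $\infty\cdot 0=0$). $(M,g,\mu)$ satisfies $CD(\rho,N)$ if $\mathrm{Ric}_{g,\mu,N}\ge\rho\,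 g$ as symmetric 2-tensors on $M$. *)

theory Defs
  imports "HOL-Analysis.Analysis"
begin

text \<open>The unit sphere S^n is modelled as sphere 0 1 inside real^'n, with CARD('n) = n+1.
  Tangent vectors at y are the theta with y \<bullet> theta = 0.\<close>

text \<open>Geodesic of the round sphere through y with initial velocity theta (y unit, theta tangent).\<close>
definition sph_geod :: "'a::real_normed_vector \<Rightarrow> 'a \<Rightarrow> real \<Rightarrow> 'a" where
  "sph_geod y \<theta> t = cos (t * norm \<theta>) *\<^sub>R y + (sin (t * norm \<theta>) / norm \<theta>) *\<^sub>R \<theta>"

text \<open>Riemannian differential of f at y applied to theta: (d f)_y(theta) = <grad_g f(y), theta>.\<close>
definition sph_d1 :: "('a::real_normed_vector \<Rightarrow> real) \<Rightarrow> 'a \<Rightarrow> 'a \<Rightarrow> real" where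
  "sph_d1 f y \<theta> = deriv (\<lambda>t. f (sph_geod y \<theta> t)) 0"

text \<open>Riemannian Hessian quadratic form: (nabla_g^2 f)_y(theta,theta) = (f o gamma)''(0)
  for the geodesic gamma with gamma(0)=y, gamma'(0)=theta.\<close>
definition sph_hess :: "('a::real_normed_vector \<Rightarrow> real) \<Rightarrow> 'a \<Rightarrow> 'a \<Rightarrow> real" where
  "sph_hess f y \<theta> = deriv (deriv (\<lambda>t. f (sph_geod y \<theta> t))) 0"

text \<open>Curvature-dimension condition CD(rho, N) (finite N) for (S^n, g, mu), where mu has density
  Psi with respect to the Riemannian volume. Ric_g = (n-1) g on the round unit sphere S^n.
  Convention 1/0 = +infinity, infinity * 0 = 0: when N = n the tensor is +infinity * (dlogPsi)^2,
  so the condition forces dlogPsi = 0 (and then that term is 0).\<close>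
definition CD_sphere :: "nat \<Rightarrow> ('a::real_inner \<Rightarrow> real) \<Rightarrow> real \<Rightarrow> real \<Rightarrow> bool" where
  "CD_sphere n \<Psi> \<rho> N \<longleftrightarrow>
     (\<forall>y \<in> sphere 0 1. \<forall>\<theta>. y \<bullet> \<theta> = 0 \<longrightarrow>
        (let V = (\<lambda>x. ln (\<Psi> x)); dV = sph_d1 V y \<theta> in
          (N = real n \<longrightarrow> dV = 0) \<and>
          (real n - 1) * (\<theta> \<bullet> \<theta>) - sph_hess V y \<theta>
             - (if N = real n then 0 else dV ^ 2 / (N - real n))
           \<ge> \<rho> * (\<theta> \<bullet> \<theta>)))"

end

theory Submission
  imports Defs
begin

lemma chain_vd:
  assumes "(F has_derivative F') (at (g t))" "(g has_vector_derivative v) (at t)"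
  shows "((\<lambda>s. F (g s)) has_vector_derivative F' v) (at t)"
proof -
  have bl: "bounded_linear F'" using assms(1) by (rule has_derivative_bounded_linear)
  have "((\<lambda>s. F (g s)) has_derivative (\<lambda>s. F' (s *\<^sub>R v))) (at t)"
    using has_derivative_compose[OF assms(2)[unfolded has_vector_derivative_def] assms(1)] .
  then show ?thesis unfolding has_vector_derivative_def
    using bl by (simp add: linear_simps)
qed

lemma geod_d1:
  fixes y th :: "'a::real_normed_vector" and r :: real
  assumes "r \<noteq> 0"
  shows "((\<lambda>t. cos (t*r) *\<^sub>R y + (sin (t*r)/r) *\<^sub>R th) has_vector_derivative
     ((-(r * sin (t*r))) *\<^sub>R y + cos (t*r) *\<^sub>R th)) (at t)"
    by (rule derivative_eq_intros has_vector_derivative_const refl)+ (use assms in \<open>auto simp: algebra_simps\<close>)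

lemma geod_d2:
  fixes y th :: "'a::real_normed_vector" and r :: real
  shows "((\<lambda>t. (-(r * sin (t*r))) *\<^sub>R y + cos (t*r) *\<^sub>R th) has_vector_derivative
     ((-(r * r * cos (t*r))) *\<^sub>R y - (r * sin (t*r)) *\<^sub>R th)) (at t)"
    by (rule derivative_eq_intros has_vector_derivative_const refl)+ (auto simp: algebra_simps)

lemma euler:
  fixes Nrm :: "'a::real_normed_vector \<Rightarrow> real"
  assumes hom: "\<And>c x. Nrm (c *\<^sub>R x) = \<bar>c\<bar> * Nrm x"
    and d: "(Nrm has_derivative D) (at x)"
  shows "D x = Nrm x"
proof -
  have v: "((\<lambda>s. s *\<^sub>R x) has_vector_derivative x) (at 1)"
    by (rule derivative_eq_intros has_vector_derivative_const refl)+ auto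
  have "((\<lambda>s. Nrm (s *\<^sub>R x)) has_vector_derivative D x) (at 1)"
    using chain_vd[of Nrm D "\<lambda>s. s *\<^sub>R x" 1 x] d v by simp
  then have a: "((\<lambda>s. Nrm (s *\<^sub>R x)) has_real_derivative D x) (at 1)"
    by (simp add: has_real_derivative_iff_has_vector_derivative)
  have "((\<lambda>s. s * Nrm x) has_real_derivative Nrm x) (at 1)"
    by (rule derivative_eq_intros refl)+ auto
  then have b: "((\<lambda>s. Nrm (s *\<^sub>R x)) has_real_derivative Nrm x) (at 1)"
    by (rule has_field_derivative_transform_within_open[where S="{0<..}"]) (auto simp: hom)
  show ?thesis using DERIV_unique[OF a b] .
qed

theorem mainTheorem6:
  fixes n :: nat
    and Nrm :: "real ^ 'm \<Rightarrow> real"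
    and G :: "real ^ 'm \<Rightarrow> real ^ 'm"
    and H :: "real ^ 'm \<Rightarrow> real ^ 'm ^ 'm"
    and \<epsilon> :: real
  assumes dim: "CARD('m) = n + 1"
    and n2: "n \<ge> 2"
    and norm_zero: "\<And>x. Nrm x = 0 \<longleftrightarrow> x = 0"
    and norm_hom: "\<And>c x. Nrm (c *\<^sub>R x) = \<bar>c\<bar> * Nrm x"
    and norm_tri: "\<And>x y. Nrm (x + y) \<le> Nrm x + Nrm y"
    and grad: "\<And>x. x \<noteq> 0 \<Longrightarrow> (Nrm has_derivative (\<lambda>h. G x \<bullet> h)) (at x)"
    and hess: "\<And>x. x \<noteq> 0 \<Longrightarrow> (G has_derivative (\<lambda>h. H x *v h)) (at x)"
    and hess_cont: "continuous_on (UNIV - {0}) H"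
    and eps_pos: "\<epsilon> > 0"
    and convex: "\<And>y \<theta>. y \<in> sphere 0 1 \<Longrightarrow> \<theta> \<in> sphere 0 1 \<Longrightarrow> y \<bullet> \<theta> = 0 \<Longrightarrow>
                   \<theta> \<bullet> (H y *v \<theta>) \<ge> \<epsilon> * Nrm y"
  shows "\<forall>\<alpha>::real. \<alpha> \<ge> - real n \<longrightarrow> (\<forall>c::real. c > 0 \<longrightarrow>
           CD_sphere n (\<lambda>y. c / Nrm y powr (real n + \<alpha>))
             (real n - 1 - (1 - \<epsilon>) * (real n + \<alpha>)) (- \<alpha>))"
proof (intro allI impI)
  fix \<alpha> c :: real
  assume al: "\<alpha> \<ge> - real n" and cpos: "c > 0"
  define \<beta> where "\<beta> = real n + \<alpha>"
  have bge: "\<beta> \<ge> 0" using al by (simp add: \<beta>_def)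
  have fnn: "Nrm x \<ge> 0" for x
  proof -
    have "Nrm (x + (-1::real) *\<^sub>R x) \<le> Nrm x + Nrm ((-1::real) *\<^sub>R x)" by (rule norm_tri)
    moreover have "Nrm (- x) = Nrm x" using norm_hom[of "-1" x] by simp
    ultimately show ?thesis using norm_zero[of 0] by simp
  qed
  have fpos: "x \<noteq> 0 \<Longrightarrow> Nrm x > 0" for x
    using fnn[of x] norm_zero[of x] by linarith
  have eul: "x \<noteq> 0 \<Longrightarrow> G x \<bullet> x = Nrm x" for x
    using euler[of Nrm "\<lambda>h. G x \<bullet> h" x] norm_hom grad[of x] by blast
  have quad: "u \<bullet> (H y *v u) \<ge> \<epsilon> * (u \<bullet> u) * Nrm y"
    if y: "y \<in> sphere 0 1" and yu: "y \<bullet> u = 0" for y u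
  proof (cases "u = 0")
    case True then show ?thesis by simp
  next
    case False
    define v where "v = (1 / norm u) *\<^sub>R u"
    have nu: "norm u > 0" using False by simp
    have v1: "v \<in> sphere 0 1" using nu by (simp add: v_def)
    have yv: "y \<bullet> v = 0" using yu by (simp add: v_def)
    have uv: "u = norm u *\<^sub>R v" using nu by (simp add: v_def)
    have "v \<bullet> (H y *v v) \<ge> \<epsilon> * Nrm y" using convex[OF y v1 yv] .
    then have "norm u ^ 2 * (v \<bullet> (H y *v v)) \<ge> norm u ^ 2 * (\<epsilon> * Nrm y)"
      by (simp add: mult_left_mono)
    moreover have "u \<bullet> (H y *v u) = norm u ^ 2 * (v \<bullet> (H y *v v))"
      by (subst (1 2) uv) (simp add: matrix_vector_mult_scaleR power2_eq_square)
    moreover have "u \<bullet> u = norm u ^ 2" by (simp add: dot_square_norm)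
    ultimately show ?thesis by (simp add: algebra_simps)
  qed
  show "CD_sphere n (\<lambda>y. c / Nrm y powr (real n + \<alpha>))
             (real n - 1 - (1 - \<epsilon>) * (real n + \<alpha>)) (- \<alpha>)"
    unfolding CD_sphere_def
  proof (intro ballI allI impI)
    fix y \<theta> :: "real ^ 'm"
    assume y: "y \<in> sphere 0 1" and yt: "y \<bullet> \<theta> = 0"
    define V where "V = (\<lambda>x. ln (c / Nrm x powr (real n + \<alpha>)))"
    have y0: "y \<noteq> 0" using y by auto
    have yy: "y \<bullet> y = 1" using y by (simp add: dot_square_norm)
    have main: "(- \<alpha> = real n \<longrightarrow> sph_d1 V y \<theta> = 0) \<and>
             (real n - 1 - (1 - \<epsilon>) * (real n + \<alpha>)) * (\<theta> \<bullet> \<theta>)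
             \<le> (real n - 1) * (\<theta> \<bullet> \<theta>) - sph_hess V y \<theta> -
                (if - \<alpha> = real n then 0 else (sph_d1 V y \<theta>)\<^sup>2 / (- \<alpha> - real n))"
    proof (cases "\<theta> = 0")
      case True
      have g: "sph_geod y \<theta> = (\<lambda>t. y)" using True by (auto simp: sph_geod_def)
      have d0: "deriv (\<lambda>t. V y) = (\<lambda>t. 0)" by (rule ext) (rule DERIV_imp_deriv[OF DERIV_const])
      show ?thesis using True unfolding sph_d1_def sph_hess_def g d0 by simp
    next
      case False
      define r where "r = norm \<theta>"
      have rpos: "r > 0" using False by (simp add: r_def)
      have tt: "\<theta> \<bullet> \<theta> = r^2" by (simp add: r_def dot_square_norm)
      define \<gamma> where "\<gamma> = (\<lambda>t. cos (t*r) *\<^sub>R y + (sin (t*r)/r) *\<^sub>R \<theta>)"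
      define \<gamma>1 where "\<gamma>1 = (\<lambda>t. (-(r * sin (t*r))) *\<^sub>R y + cos (t*r) *\<^sub>R \<theta>)"
      define \<gamma>2 where "\<gamma>2 = (\<lambda>t. (-(r * r * cos (t*r))) *\<^sub>R y - (r * sin (t*r)) *\<^sub>R \<theta>)"
      have geq: "sph_geod y \<theta> = \<gamma>" by (rule ext) (simp add: sph_geod_def \<gamma>_def r_def)
      have dg: "(\<gamma> has_vector_derivative \<gamma>1 t) (at t)" for t
        unfolding \<gamma>_def \<gamma>1_def using geod_d1[of r y \<theta> t] rpos by simp
      have dg1: "(\<gamma>1 has_vector_derivative \<gamma>2 t) (at t)" for t
        unfolding \<gamma>2_def \<gamma>1_def using geod_d2[of r y \<theta> t] by simp
      have gn: "\<gamma> t \<noteq> 0" for t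
      proof -
        have "\<gamma> t \<bullet> \<gamma> t = (cos (t*r))^2 + (sin (t*r))^2"
          using rpos yt yy tt
          by (simp add: \<gamma>_def inner_add_left inner_add_right inner_commute power2_eq_square field_simps)
        then have "\<gamma> t \<bullet> \<gamma> t = 1" by simp
        then show ?thesis by auto
      qed
      define \<phi> where "\<phi> = (\<lambda>t. Nrm (\<gamma> t))"
      define \<phi>1 where "\<phi>1 = (\<lambda>t. G (\<gamma> t) \<bullet> \<gamma>1 t)"
      define \<phi>2 where "\<phi>2 = (\<lambda>t. G (\<gamma> t) \<bullet> \<gamma>2 t + (H (\<gamma> t) *v \<gamma>1 t) \<bullet> \<gamma>1 t)"
      have php: "\<phi> t > 0" for t unfolding \<phi>_def using fpos gn by blast
      have dphi: "(\<phi> has_real_derivative \<phi>1 t) (at t)" for t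
        using chain_vd[OF grad[OF gn[of t]] dg[of t]]
        by (simp add: \<phi>_def \<phi>1_def has_real_derivative_iff_has_vector_derivative)
      have dphi1: "(\<phi>1 has_real_derivative \<phi>2 t) (at t)" for t
      proof -
        have a: "((\<lambda>s. G (\<gamma> s)) has_vector_derivative (H (\<gamma> t) *v \<gamma>1 t)) (at t)"
          using chain_vd[OF hess[OF gn[of t]] dg[of t]] by simp
        show ?thesis
          using bounded_bilinear.has_vector_derivative[OF bounded_bilinear_inner a dg1[of t]]
          by (simp add: \<phi>1_def \<phi>2_def has_real_derivative_iff_has_vector_derivative)
      qed
      have Veq: "(\<lambda>t. V (sph_geod y \<theta> t)) = (\<lambda>t. ln c - \<beta> * ln (\<phi> t))"
      proof (rule ext)
        fix t
        show "V (sph_geod y \<theta> t) = ln c - \<beta> * ln (\<phi> t)"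
          using php[of t] cpos
          by (simp add: V_def geq \<phi>_def \<beta>_def ln_div ln_powr)
      qed
      define W1 where "W1 = (\<lambda>t. - \<beta> * (\<phi>1 t / \<phi> t))"
      have dW: "((\<lambda>t. ln c - \<beta> * ln (\<phi> t)) has_real_derivative W1 t) (at t)" for t
        using php[of t]
        by (auto intro!: derivative_eq_intros dphi simp: W1_def field_simps)
      have dW1: "(W1 has_real_derivative (- \<beta> * ((\<phi>2 t * \<phi> t - \<phi>1 t * \<phi>1 t) / (\<phi> t)^2))) (at t)" for t
        unfolding W1_def using php[of t]
        by (auto intro!: derivative_eq_intros dphi dphi1 simp: power2_eq_square field_simps)
      have derW: "deriv (\<lambda>t. ln c - \<beta> * ln (\<phi> t)) = W1"
        by (rule ext) (rule DERIV_imp_deriv[OF dW])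
      have d1: "sph_d1 V y \<theta> = W1 0"
        unfolding sph_d1_def Veq derW ..
      have h1: "sph_hess V y \<theta> = - \<beta> * ((\<phi>2 0 * \<phi> 0 - \<phi>1 0 * \<phi>1 0) / (\<phi> 0)^2)"
        unfolding sph_hess_def Veq derW by (rule DERIV_imp_deriv[OF dW1])
      have g0: "\<gamma> 0 = y" "\<gamma>1 0 = \<theta>" "\<gamma>2 0 = (-(r*r)) *\<^sub>R y"
        by (simp_all add: \<gamma>_def \<gamma>1_def \<gamma>2_def)
      define P where "P = \<phi> 0"
      define D where "D = \<phi>1 0"
      define S where "S = \<phi>2 0"
      have Pp: "P > 0" using php by (simp add: P_def)
      have PN: "P = Nrm y" by (simp add: P_def \<phi>_def g0)
      have Sv: "S = (H y *v \<theta>) \<bullet> \<theta> - r^2 * Nrm y"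
        using eul[OF y0] by (simp add: S_def \<phi>2_def g0 power2_eq_square)
      have Sge: "S \<ge> - (1 - \<epsilon>) * r^2 * P"
        using quad[OF y yt] Sv PN tt by (simp add: inner_commute algebra_simps)
      have W10: "W1 0 = - \<beta> * (D / P)" by (simp add: W1_def D_def P_def)
      have h2: "sph_hess V y \<theta> = - \<beta> * ((S * P - D * D) / P^2)"
        using h1 by (simp add: S_def P_def D_def)
      show ?thesis
      proof (cases "\<beta> = 0")
        case True
        then have "- \<alpha> = real n" by (simp add: \<beta>_def)
        moreover have "real n + \<alpha> = 0" using True by (simp add: \<beta>_def)
        ultimately show ?thesis using True unfolding d1 h2 W10 by simp
      next
        case False
        then have bp: "\<beta> > 0" using bge by simp
        have ne: "- \<alpha> \<noteq> real n" "- \<alpha> - real n = - \<beta>" using False by (auto simp: \<beta>_def)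
        have key: "- (- \<beta> * ((S * P - D * D) / P^2)) - (- \<beta> * (D / P))^2 / (- \<beta>) = \<beta> * (S / P)"
          using bp Pp by (simp add: field_simps power2_eq_square)
        have "S / P \<ge> - (1 - \<epsilon>) * r^2" using Sge Pp by (simp add: field_simps)
        then have "\<beta> * (S / P) \<ge> \<beta> * (- (1 - \<epsilon>) * r^2)" using bp by (intro mult_left_mono) auto
        moreover have "(if - \<alpha> = real n then 0 else (- \<beta> * (D / P))\<^sup>2 / (- \<alpha> - real n))
            = (- \<beta> * (D / P))\<^sup>2 / (- \<beta>)" using ne by simp
        moreover have "real n + \<alpha> = \<beta>" by (simp add: \<beta>_def)
        moreover have "(real n - 1 - (1 - \<epsilon>) * \<beta>) * r^2 = (real n - 1) * r^2 + \<beta> * (- (1 - \<epsilon>) * r^2)"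
          by (simp add: algebra_simps)
        ultimately show ?thesis unfolding d1 h2 W10 tt \<open>real n + \<alpha> = \<beta>\<close> using ne key
          by linarith
      qed
    qed
    then show "let V = \<lambda>x. ln (c / Nrm x powr (real n + \<alpha>)); dV = sph_d1 V y \<theta>
          in (- \<alpha> = real n \<longrightarrow> dV = 0) \<and>
             (real n - 1) * (\<theta> \<bullet> \<theta>) - sph_hess V y \<theta> -
                (if - \<alpha> = real n then 0 else dV\<^sup>2 / (- \<alpha> - real n))
             \<ge> (real n - 1 - (1 - \<epsilon>) * (real n + \<alpha>)) * (\<theta> \<bullet> \<theta>)"
      unfolding Let_def V_def .
  qed
qed

end
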